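(* Let $\mathbb{K}$ be any field and $n\geq 4$. Let $S$ be a linear subspace of $\mathrm{S}_n(\mathbb{K})$ in which every matrix has rank at most $3$. For $M\in S$ let $P(M)\in\mathrm{S}_{n-1}(\mathbb{K})$ be the upper-left $(n-1)\times(n-1)$ submatrix of $M$. Assume that $P(S)\subset\mathrm{WS}_{n-1,1,1}(\mathbb{K})$ and $\dim P(S)>5$. Then $S$ is congruent to a subspace of $\mathrm{WS}_{n,1,1}(\mathbb{K})$.
   Context: $\mathrm{S}_p(\mathbb{K})$ denotes the $p\times p$ symmetric matrices. $\mathrm{WS}_{p,1,1}(\mathbb{K})$ is the space of $M=(m_{i,j})\in\mathrm{S}_p(\mathbb{K})$ with $m_{i,j}=0$ whenever $i>1$, $j>1$ and $\max(i,j)>2$. Subsets $\mathcal{V},\mathcal{W}$ of $\mathrm{M}_n(\mathbb{K})$ are congruent if $\mathcal{V}=Q\mathcal{W}Q^T$ for some $Q\in\mathrm{GL}_n(\mathbb{K})$. *)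

theory Defs
  imports "Jordan_Normal_Form.DL_Rank"
begin

definition sym_mats :: "nat \<Rightarrow> 'a::field mat set" where
  "sym_mats p = {M \<in> carrier_mat p p. transpose_mat M = M}"

text \<open>WS_{p,1,1}: symmetric M with m_{i,j} = 0 whenever i > 1, j > 1, max(i,j) > 2
  (1-based indices in the paper; 0-based here: i >= 1, j >= 1, max i j >= 2).\<close>
definition WS11 :: "nat \<Rightarrow> 'a::field mat set" where
  "WS11 p = {M \<in> sym_mats p. \<forall>i<p. \<forall>j<p. 1 \<le> i \<and> 1 \<le> j \<and> 2 \<le> max i j \<longrightarrow> M $$ (i,j) = 0}"

definition mat_subspace :: "nat \<Rightarrow> 'a::field mat set \<Rightarrow> bool" where
  "mat_subspace n V = subspace class_ring V (module_mat TYPE('a) n n)"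

definition mat_subspace_dim :: "nat \<Rightarrow> 'a::field mat set \<Rightarrow> nat" where
  "mat_subspace_dim n V = vectorspace.dim class_ring ((module_mat TYPE('a) n n)\<lparr>carrier := V\<rparr>)"

definition upper_left :: "nat \<Rightarrow> 'a mat \<Rightarrow> 'a mat" where
  "upper_left n M = mat (n - 1) (n - 1) (\<lambda>(i,j). M $$ (i,j))"

definition congr_img :: "'a::field mat \<Rightarrow> 'a mat set \<Rightarrow> 'a mat set" where
  "congr_img Q V = (\<lambda>M. Q * M * transpose_mat Q) ` V"

end

theory Submission
  imports Defs "Jordan_Normal_Form.DL_Rank_Submatrix"
begin


lemma det_mat_Suc:
  fixes f :: "nat \<times> nat \<Rightarrow> 'a::comm_ring_1"
  shows "det (mat (Suc n) (Suc n) f) = (\<Sum>i<Suc n. f (i,0) * ((-1)^i * det (mat n n (\<lambda>(i',j'). f (if i' < i then i' else Suc i', Suc j')))))"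
proof -
  have "det (mat (Suc n) (Suc n) f) = (\<Sum>i<Suc n. (mat (Suc n) (Suc n) f) $$ (i,0) * cofactor (mat (Suc n) (Suc n) f) i 0)"
    by (rule laplace_expansion_column) auto
  also have "\<dots> = (\<Sum>i<Suc n. f (i,0) * ((-1)^i * det (mat n n (\<lambda>(i',j'). f (if i' < i then i' else Suc i', Suc j')))))"
  proof (rule sum.cong[OF refl])
    fix i assume "i \<in> {..<Suc n}"
    then have i: "i < Suc n" by auto
    have "mat_delete (mat (Suc n) (Suc n) f) i 0 = mat n n (\<lambda>(i',j'). f (if i' < i then i' else Suc i', Suc j'))"
      unfolding mat_delete_def by (rule eq_matI) auto
    then show "(mat (Suc n) (Suc n) f) $$ (i,0) * cofactor (mat (Suc n) (Suc n) f) i 0 = f (i,0) * ((-1)^i * det (mat n n (\<lambda>(i',j'). f (if i' < i then i' else Suc i', Suc j'))))"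
      using i unfolding cofactor_def by simp
  qed
  finally show ?thesis .
qed

lemma det_mat_0: "det (mat 0 0 f) = 1" by (rule det_dim_zero) auto

lemma det4: fixes f :: "nat \<times> nat \<Rightarrow> 'a::comm_ring_1"
  shows "det (mat 4 4 f) = f (0,0) * f (1,1) * f (2,2) * f (3,3) - f (0,0) * f (1,1) * f (2,3) * f (3,2) - f (0,0) * f (1,2) * f (2,1) * f (3,3) + f (0,0) * f (1,2) * f (2,3) * f (3,1) + f (0,0) * f (1,3) * f (2,1) * f (3,2) - f (0,0) * f (1,3) * f (2,2) * f (3,1) - f (0,1) * f (1,0) * f (2,2) * f (3,3) + f (0,1) * f (1,0) * f (2,3) * f (3,2) + f (0,1) * f (1,2) * f (2,0) * f (3,3) - f (0,1) * f (1,2) * f (2,3) * f (3,0) - f (0,1) * f (1,3) * f (2,0) * f (3,2) + f (0,1) * f (1,3) * f (2,2) * f (3,0) + f (0,2) * f (1,0) * f (2,1) * f (3,3) - f (0,2) * f (1,0) * f (2,3) * f (3,1) - f (0,2) * f (1,1) * f (2,0) * f (3,3) + f (0,2) * f (1,1) * f (2,3) * f (3,0) + f (0,2) * f (1,3) * f (2,0) * f (3,1) - f (0,2) * f (1,3) * f (2,1) * f (3,0) - f (0,3) * f (1,0) * f (2,1) * f (3,2) + f (0,3) * f (1,0) * f (2,2) * f (3,1) + f (0,3) * f (1,1) * f (2,0) * f (3,2) - f (0,3) * f (1,1) * f (2,2) * f (3,0) - f (0,3) * f (1,2) * f (2,0) * f (3,1) + f (0,3) * f (1,2) * f (2,1)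 * f (3,0)"
  by (simp add: numeral_eq_Suc det_mat_Suc det_mat_0 lessThan_Suc algebra_simps)

definition emat :: "nat \<Rightarrow> 'a::comm_ring_1 \<Rightarrow> nat \<Rightarrow> nat \<Rightarrow> 'a mat" where
  "emat n a k l = mat n n (\<lambda>(i,j). (if i = j then 1 else 0) + (if i = k \<and> j = l then a else 0))"

lemma emat_carrier[simp]: "emat n a k l \<in> carrier_mat n n"
  unfolding emat_def by auto

lemma emat_mult_left:
  assumes A: "A \<in> carrier_mat n m" and i: "i < n" and j: "j < m" and l: "l < n"
  shows "(emat n a k l * A) $$ (i,j) = A $$ (i,j) + (if i = k then a * A $$ (l,j) else 0)"
proof -
  have "(emat n a k l * A) $$ (i,j) = (\<Sum>b<n. ((if i = b then 1 else 0) + (if i = k \<and> b = l then a else 0)) * A $$ (b,j))"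
    using A i j unfolding emat_def by (auto simp: scalar_prod_def lessThan_atLeast0 intro!: sum.cong)
  also have "\<dots> = (\<Sum>b<n. (if i = b then A $$ (b,j) else 0) + (if i = k \<and> b = l then a * A $$ (b,j) else 0))"
    by (rule sum.cong) (auto simp: algebra_simps)
  also have "\<dots> = (\<Sum>b<n. (if i = b then A $$ (b,j) else 0)) + (\<Sum>b<n. (if i = k \<and> b = l then a * A $$ (b,j) else 0))"
    by (rule sum.distrib)
  also have "\<dots> = A $$ (i,j) + (if i = k then a * A $$ (l,j) else 0)"
    using i l by (simp add: sum.delta)
  finally show ?thesis .
qed

lemma emat_mult_right:
  assumes A: "A \<in> carrier_mat m n" and i: "i < m" and j: "j < n" and l: "l < n"
  shows "(A * transpose_mat (emat n a k l)) $$ (i,j) = A $$ (i,j) + (if j = k then a * A $$ (i,l) else 0)"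
proof -
  have "(A * transpose_mat (emat n a k l)) $$ (i,j) = (\<Sum>b<n. A $$ (i,b) * ((if j = b then 1 else 0) + (if j = k \<and> b = l then a else 0)))"
    using A i j unfolding emat_def by (auto simp: scalar_prod_def lessThan_atLeast0 intro!: sum.cong)
  also have "\<dots> = (\<Sum>b<n. (if j = b then A $$ (i,b) else 0) + (if j = k \<and> b = l then a * A $$ (i,b) else 0))"
    by (rule sum.cong) (auto simp: algebra_simps)
  also have "\<dots> = (\<Sum>b<n. (if j = b then A $$ (i,b) else 0)) + (\<Sum>b<n. (if j = k \<and> b = l then a * A $$ (i,b) else 0))"
    by (rule sum.distrib)
  also have "\<dots> = A $$ (i,j) + (if j = k then a * A $$ (i,l) else 0)"
    using j l by (simp add: sum.delta)
  finally show ?thesis .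
qed

lemma emat_cong_entry:
  assumes A: "A \<in> carrier_mat n n" and i: "i < n" and j: "j < n" and l: "l < n" and kl: "k \<noteq> l"
  shows "(emat n a k l * A * transpose_mat (emat n a k l)) $$ (i,j) =
     A $$ (i,j) + (if i = k then a * A $$ (l,j) else 0) + (if j = k then a * A $$ (i,l) else 0)
     + (if i = k \<and> j = k then a * a * A $$ (l,l) else 0)"
proof -
  have c: "emat n a k l * A \<in> carrier_mat n n" by (rule mult_carrier_mat[OF emat_carrier A])
  show ?thesis
    unfolding emat_mult_right[OF c i j l] emat_mult_left[OF A i j l] emat_mult_left[OF A i l l]
    using kl by (auto simp: algebra_simps)
qed

lemma emat_inv:
  assumes "k \<noteq> l" "k < n" "l < n"
  shows "emat n a k l * emat n (-a) k l = 1\<^sub>m n"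
proof (rule eq_matI)
  fix i j assume ij: "i < dim_row (1\<^sub>m n)" "j < dim_col (1\<^sub>m n)"
  then have i: "i < n" and j: "j < n" by auto
  show "(emat n a k l * emat n (-a) k l) $$ (i,j) = 1\<^sub>m n $$ (i,j)"
    unfolding emat_mult_left[OF emat_carrier i j assms(3)]
    using assms i j by (auto simp: emat_def)
qed (auto simp: emat_def)

definition ix4 :: "nat \<Rightarrow> nat \<Rightarrow> nat \<Rightarrow> nat \<Rightarrow> nat \<Rightarrow> nat" where
  "ix4 a b c d i = (if i = 0 then a else if i = 1 then b else if i = 2 then c else d)"

lemma minor4_zero:
  fixes M :: "'a::field mat"
  assumes M: "M \<in> carrier_mat n n" and rk: "vec_space.rank n M \<le> 3"
    and abcd: "a < b" "b < c" "c < d" "d < n"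
  shows "det (mat 4 4 (\<lambda>(i,j). M $$ (ix4 a b c d i, ix4 a b c d j))) = 0"
proof (rule ccontr)
  let ?I = "{a,b,c,d}"
  assume ne: "det (mat 4 4 (\<lambda>(i,j). M $$ (ix4 a b c d i, ix4 a b c d j))) \<noteq> 0"
  have cardI: "card {i. i < n \<and> i \<in> ?I} = 4"
  proof -
    have "{i. i < n \<and> i \<in> ?I} = ?I" using abcd by auto
    then show ?thesis using abcd by simp
  qed
  have e0: "{x \<in> ?I. x < a} = {}" and e1: "{x \<in> ?I. x < b} = {a}"
    and e2: "{x \<in> ?I. x < c} = {a,b}" and e3: "{x \<in> ?I. x < d} = {a,b,c}"
    using abcd by auto
  have c1: "card {a} = 1" and c2: "card {a,b} = 2" and c3: "card {a,b,c} = 3" using abcd by auto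
  have p0: "pick ?I 0 = a" using pick_card_in_set[of a ?I] unfolding e0 by simp
  have p1: "pick ?I 1 = b" using pick_card_in_set[of b ?I] unfolding e1 c1 by (simp del: pick.simps)
  have p2: "pick ?I 2 = c" using pick_card_in_set[of c ?I] unfolding e2 c2 by (simp del: pick.simps)
  have p3: "pick ?I 3 = d" using pick_card_in_set[of d ?I] unfolding e3 c3 by (simp del: pick.simps)
  have pk: "i < 4 \<Longrightarrow> pick ?I i = ix4 a b c d i" for i
    using p0 p1 p2 p3 unfolding ix4_def
    by (auto simp: less_Suc_eq numeral_eq_Suc simp del: pick.simps)
  have "submatrix M ?I ?I = mat 4 4 (\<lambda>(i,j). M $$ (ix4 a b c d i, ix4 a b c d j))"
    unfolding submatrix_def using M cardI by (intro eq_matI) (auto simp: pk)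
  then have "4 \<le> vec_space.rank n M"
    using vec_space.rank_gt_minor[OF M, of ?I ?I] ne cardI by auto
  then show False using rk by auto
qed



definition qf :: "'a::field \<Rightarrow> nat \<Rightarrow> 'a mat \<Rightarrow> 'a" where
  "qf l n M = M $$ (1,1) * (M $$ (n-1,n-1) - 2 * l * M $$ (0,n-1) + l * l * M $$ (0,0)) - (M $$ (1,n-1) - l * M $$ (0,1))^2"

lemma fin_step:
  fixes A :: "'a::field mat"
  assumes A: "A \<in> carrier_mat n n" and n3: "n \<ge> 3"
    and pat: "\<And>i j. i < n \<Longrightarrow> j < n \<Longrightarrow> 1 \<le> i \<Longrightarrow> 1 \<le> j \<Longrightarrow> \<not> (i \<in> {1, n-1} \<and> j \<in> {1, n-1}) \<Longrightarrow> A $$ (i,j) = 0"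
    and sy: "A $$ (n-1,1) = A $$ (1,n-1)"
    and h1: "A $$ (1,n-1) + \<alpha> * A $$ (n-1,n-1) + \<beta> * (A $$ (1,1) + 2 * \<alpha> * A $$ (1,n-1) + \<alpha> * \<alpha> * A $$ (n-1,n-1)) = 0"
    and h2: "A $$ (n-1,n-1) + 2 * \<beta> * (A $$ (1,n-1) + \<alpha> * A $$ (n-1,n-1)) + \<beta> * \<beta> * (A $$ (1,1) + 2 * \<alpha> * A $$ (1,n-1) + \<alpha> * \<alpha> * A $$ (n-1,n-1)) = 0"
    and ij: "i < n" "j < n" "1 \<le> i" "1 \<le> j" "2 \<le> max i j"
  shows "(emat n \<beta> (n-1) 1 * (emat n \<alpha> 1 (n-1) * A * transpose_mat (emat n \<alpha> 1 (n-1))) * transpose_mat (emat n \<beta> (n-1) 1)) $$ (i,j) = 0"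
proof -
  have A2: "emat n \<alpha> 1 (n-1) * A * transpose_mat (emat n \<alpha> 1 (n-1)) \<in> carrier_mat n n"
    using A by (meson emat_carrier mult_carrier_mat transpose_carrier_mat)
  have nn: "1 < n" "n - 1 < n" "1 \<noteq> n - 1" using n3 by auto
  note e2 = emat_cong_entry[OF A _ _ nn(2) nn(3)]
  note e3 = emat_cong_entry[OF A2 _ _ nn(1) nn(3)[symmetric]]
  let ?N = "emat n \<alpha> 1 (n-1) * A * transpose_mat (emat n \<alpha> 1 (n-1))"
  let ?y = "A $$ (1,1)" and ?c = "A $$ (1,n-1)" and ?d = "A $$ (n-1,n-1)"
  have N2: "?N $$ (i',j') = (if i' = 1 \<and> j' = 1 then ?y + 2 * \<alpha> * ?c + \<alpha> * \<alpha> * ?d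
      else if i' = 1 \<and> j' = n-1 then ?c + \<alpha> * ?d else if i' = n-1 \<and> j' = 1 then ?c + \<alpha> * ?d
      else if i' = n-1 \<and> j' = n-1 then ?d else 0)"
    if "i' < n" "j' < n" "1 \<le> i'" "1 \<le> j'" for i' j'
  proof -
    have z: "\<And>a b. a < n \<Longrightarrow> b < n \<Longrightarrow> 1 \<le> a \<Longrightarrow> 1 \<le> b \<Longrightarrow> a \<noteq> 1 \<Longrightarrow> a \<noteq> n - 1 \<Longrightarrow> A $$ (a,b) = 0 \<and> A $$ (b,a) = 0"
      using pat by auto
    show ?thesis
      unfolding e2[OF that(1,2)]
      using that nn sy z[of i' j'] z[of j' i'] z[of i' "n-1"] z[of i' 1] z[of j' "n-1"] z[of j' 1]
      by (auto simp: algebra_simps)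
  qed
  have nn1: "1 \<le> n - 1" using n3 by auto
  show ?thesis
    unfolding e3[OF ij(1,2)]
    using ij nn nn1 h1 h2 N2[OF ij(1) ij(2) ij(3) ij(4)] N2[OF ij(1) nn(1) ij(3) order_refl] N2[OF nn(1) ij(2) order_refl ij(4)] N2[OF nn(1) nn(1) order_refl order_refl]
    by (auto simp: algebra_simps)
qed

locale LS =
  fixes S :: "'a::field mat set" and n :: nat
  assumes n4: "n \<ge> 4" and sub: "mat_subspace n S" and symS: "S \<subseteq> sym_mats n"
    and rk: "\<forall>M\<in>S. vec_space.rank n M \<le> 3" and ws: "upper_left n ` S \<subseteq> WS11 (n - 1)"
begin

lemma carr: "M \<in> S \<Longrightarrow> M \<in> carrier_mat n n"
  using symS unfolding sym_mats_def by auto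

lemma symm: "M \<in> S \<Longrightarrow> i < n \<Longrightarrow> j < n \<Longrightarrow> M $$ (j,i) = M $$ (i,j)"
proof -
  assume M: "M \<in> S" and i: "i < n" and j: "j < n"
  then have "transpose_mat M = M" using symS unfolding sym_mats_def by auto
  then have "transpose_mat M $$ (i,j) = M $$ (i,j)" by simp
  then show ?thesis using carr[OF M] i j by simp
qed

lemma wsz: "M \<in> S \<Longrightarrow> i < n - 1 \<Longrightarrow> j < n - 1 \<Longrightarrow> 1 \<le> i \<Longrightarrow> 1 \<le> j \<Longrightarrow> 2 \<le> max i j \<Longrightarrow> M $$ (i,j) = 0"
proof -
  assume M: "M \<in> S" and h: "i < n - 1" "j < n - 1" "1 \<le> i" "1 \<le> j" "2 \<le> max i j"
  have "upper_left n M \<in> WS11 (n - 1)" using ws M by auto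
  then have "upper_left n M $$ (i,j) = 0" using h unfolding WS11_def by auto
  then show ?thesis using h unfolding upper_left_def by simp
qed

lemma subm: "submodule class_ring S (module_mat TYPE('a) n n)"
  using sub unfolding mat_subspace_def by (rule VectorSpace.subspace.submod)

lemma add_S: "M \<in> S \<Longrightarrow> N \<in> S \<Longrightarrow> M + N \<in> S"
  using submodule.m_closed[OF subm] by (simp add: module_mat_simps)

lemma smult_S: "M \<in> S \<Longrightarrow> c \<cdot>\<^sub>m M \<in> S"
  using submodule.smult_closed[OF subm] by (simp add: module_mat_simps)

lemma add_idx: "M \<in> S \<Longrightarrow> N \<in> S \<Longrightarrow> i < n \<Longrightarrow> j < n \<Longrightarrow> (M + N) $$ (i,j) = M $$ (i,j) + N $$ (i,j)"
  using carr[of N] by simp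

lemma step1_lt:
  assumes M: "M \<in> S" and r: "2 \<le> r" "r < s" and s: "s \<le> n - 2"
  shows "M $$ (0,r) * M $$ (s,n-1) = M $$ (0,s) * M $$ (r,n-1)"
proof -
  have n: "s < n - 1" "n - 1 < n" using s n4 by auto
  have "det (mat 4 4 (\<lambda>(i,j). M $$ (ix4 0 r s (n-1) i, ix4 0 r s (n-1) j))) = 0"
    using minor4_zero[OF carr[OF M]] rk M r n by auto
  moreover have z: "M $$ (r,r) = 0" "M $$ (r,s) = 0" "M $$ (s,r) = 0" "M $$ (s,s) = 0"
    using wsz[OF M] r n by auto
  moreover have y: "M $$ (r,0) = M $$ (0,r)" "M $$ (s,0) = M $$ (0,s)" "M $$ (n-1,0) = M $$ (0,n-1)"
     "M $$ (n-1,r) = M $$ (r,n-1)" "M $$ (n-1,s) = M $$ (s,n-1)"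
    using symm[OF M] r n by auto
  ultimately have "(M $$ (0,r) * M $$ (s,n-1) - M $$ (0,s) * M $$ (r,n-1))^2 = 0"
    by (simp add: det4 ix4_def power2_eq_square algebra_simps)
  then show ?thesis by simp
qed


lemma step1:
  assumes M: "M \<in> S" and r: "2 \<le> r" "r \<le> n - 2" and s: "2 \<le> s" "s \<le> n - 2"
  shows "M $$ (0,r) * M $$ (s,n-1) = M $$ (0,s) * M $$ (r,n-1)"
proof (cases r s rule: linorder_cases)
  case less then show ?thesis using step1_lt[OF M] r s by auto
next
  case equal then show ?thesis by simp
next
  case greater then show ?thesis using step1_lt[OF M, of s r] r s by (auto simp: mult.commute)
qed

lemma polar:
  assumes M: "M \<in> S" and N: "N \<in> S" and r: "2 \<le> r" "r \<le> n - 2" and s: "2 \<le> s" "s \<le> n - 2"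
  shows "M $$ (0,r) * N $$ (s,n-1) + N $$ (0,r) * M $$ (s,n-1) = M $$ (0,s) * N $$ (r,n-1) + N $$ (0,s) * M $$ (r,n-1)"
proof -
  have MN: "M + N \<in> S" using add_S M N by auto
  have i: "r < n" "s < n" "n - 1 < n" "0 < n" using r s n4 by auto
  have "(M + N) $$ (0,r) * (M + N) $$ (s,n-1) = (M + N) $$ (0,s) * (M + N) $$ (r,n-1)"
    using step1[OF MN r s] .
  then have "(M $$ (0,r) + N $$ (0,r)) * (M $$ (s,n-1) + N $$ (s,n-1)) = (M $$ (0,s) + N $$ (0,s)) * (M $$ (r,n-1) + N $$ (r,n-1))"
    using add_idx[OF M N] i by simp
  then show ?thesis using step1[OF M r s] step1[OF N r s] by (simp add: algebra_simps)
qed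

lemma kill:
  fixes u v f :: "nat \<Rightarrow> 'a"
  assumes D: "u r1 * v r2 - u r2 * v r1 \<noteq> 0"
    and hu: "\<And>r s. P r \<Longrightarrow> P s \<Longrightarrow> u r * f s = u s * f r"
    and hv: "\<And>r s. P r \<Longrightarrow> P s \<Longrightarrow> v r * f s = v s * f r"
    and r12: "P r1" "P r2" and s: "P s"
  shows "f s = 0"
proof -
  have a1: "u r1 * f r2 = u r2 * f r1" and a2: "v r1 * f r2 = v r2 * f r1" using hu hv r12 by auto
  have "(u r1 * v r2 - u r2 * v r1) * f r2 = v r2 * (u r1 * f r2) - u r2 * (v r1 * f r2)" by (simp add: algebra_simps)
  also have "\<dots> = 0" unfolding a1 a2 by (simp add: algebra_simps)
  finally have f2: "f r2 = 0" using D by simp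
  have "(u r1 * v r2 - u r2 * v r1) * f r1 = u r1 * (v r1 * f r2) - v r1 * (u r1 * f r2)" 
    unfolding a1 a2 by (simp add: algebra_simps)
  also have "\<dots> = 0" unfolding f2 by simp
  finally have f1: "f r1 = 0" using D by simp
  have "u r1 * f s = 0" "u r2 * f s = 0" "v r1 * f s = 0" "v r2 * f s = 0"
    using hu[OF r12(1) s] hu[OF r12(2) s] hv[OF r12(1) s] hv[OF r12(2) s] f1 f2 by auto
  then have "(u r1 * v r2 - u r2 * v r1) * f s = v r2 * (u r1 * f s) - u r2 * (v r1 * f s)"
    by (simp add: algebra_simps)
  then have "(u r1 * v r2 - u r2 * v r1) * f s = 0" using \<open>u r1 * f s = 0\<close> \<open>v r1 * f s = 0\<close> by simp
  then show ?thesis using D by simp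
qed

lemma par:
  assumes N: "N \<in> S" and hN: "\<forall>s. 2 \<le> s \<and> s \<le> n - 2 \<longrightarrow> N $$ (s,n-1) = l * N $$ (0,s)"
    and M: "M \<in> S" and r: "2 \<le> r" "r \<le> n - 2" and s: "2 \<le> s" "s \<le> n - 2"
  shows "N $$ (0,r) * (M $$ (s,n-1) - l * M $$ (0,s)) = N $$ (0,s) * (M $$ (r,n-1) - l * M $$ (0,r))"
  using polar[OF N M r s] hN r s by (simp add: algebra_simps)

lemma step2:
  assumes a: "a \<in> S" and b: "b \<in> S" and r1: "2 \<le> r1" "r1 \<le> n - 2" and r2: "2 \<le> r2" "r2 \<le> n - 2"
    and D: "a $$ (0,r1) * b $$ (0,r2) - a $$ (0,r2) * b $$ (0,r1) \<noteq> 0"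
  shows "\<exists>l. \<forall>M\<in>S. \<forall>s. 2 \<le> s \<and> s \<le> n - 2 \<longrightarrow> M $$ (s,n-1) = l * M $$ (0,s)"
proof -
  obtain r0 where r0: "2 \<le> r0" "r0 \<le> n - 2" "a $$ (0,r0) \<noteq> 0"
    using D r1 r2 by (metis mult_zero_left diff_self)
  define l where "l = a $$ (r0,n-1) / a $$ (0,r0)"
  have ca: "\<forall>s. 2 \<le> s \<and> s \<le> n - 2 \<longrightarrow> a $$ (s,n-1) = l * a $$ (0,s)"
  proof (intro allI impI)
    fix s assume s: "2 \<le> s \<and> s \<le> n - 2"
    have "a $$ (0,r0) * a $$ (s,n-1) = a $$ (0,s) * a $$ (r0,n-1)" using step1[OF a] r0 s by auto
    then show "a $$ (s,n-1) = l * a $$ (0,s)" using r0(3) unfolding l_def by (simp add: field_simps)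
  qed
  have cb: "\<forall>s. 2 \<le> s \<and> s \<le> n - 2 \<longrightarrow> b $$ (s,n-1) = l * b $$ (0,s)"
  proof (intro allI impI)
    fix s assume s: "2 \<le> s \<and> s \<le> n - 2"
    have "(\<lambda>s. b $$ (s,n-1) - l * b $$ (0,s)) s = 0"
    proof (rule kill[of "\<lambda>r. a $$ (0,r)" r1 "\<lambda>r. b $$ (0,r)" r2 "\<lambda>s. 2 \<le> s \<and> s \<le> n - 2"])
      show "a $$ (0,r1) * b $$ (0,r2) - a $$ (0,r2) * b $$ (0,r1) \<noteq> 0" by fact
      show "\<And>r s. 2 \<le> r \<and> r \<le> n - 2 \<Longrightarrow> 2 \<le> s \<and> s \<le> n - 2 \<Longrightarrow>
         a $$ (0,r) * (b $$ (s,n-1) - l * b $$ (0,s)) = a $$ (0,s) * (b $$ (r,n-1) - l * b $$ (0,r))"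
        using par[OF a ca b] by auto
      show "\<And>r s. 2 \<le> r \<and> r \<le> n - 2 \<Longrightarrow> 2 \<le> s \<and> s \<le> n - 2 \<Longrightarrow>
         b $$ (0,r) * (b $$ (s,n-1) - l * b $$ (0,s)) = b $$ (0,s) * (b $$ (r,n-1) - l * b $$ (0,r))"
        using step1[OF b] by (auto simp: algebra_simps)
    qed (use r1 r2 s in auto)
    then show "b $$ (s,n-1) = l * b $$ (0,s)" by simp
  qed
  show ?thesis
  proof (intro exI ballI allI impI)
    fix M s assume M: "M \<in> S" and s: "2 \<le> s \<and> s \<le> n - 2"
    have "(\<lambda>s. M $$ (s,n-1) - l * M $$ (0,s)) s = 0"
    proof (rule kill[of "\<lambda>r. a $$ (0,r)" r1 "\<lambda>r. b $$ (0,r)" r2 "\<lambda>s. 2 \<le> s \<and> s \<le> n - 2"])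
      show "a $$ (0,r1) * b $$ (0,r2) - a $$ (0,r2) * b $$ (0,r1) \<noteq> 0" by fact
    qed (use par[OF a ca M] par[OF b cb M] r1 r2 s in auto)
    then show "M $$ (s,n-1) = l * M $$ (0,s)" by simp
  qed
qed


lemma step4:
  assumes hl: "\<forall>M\<in>S. \<forall>s. 2 \<le> s \<and> s \<le> n - 2 \<longrightarrow> M $$ (s,n-1) = l * M $$ (0,s)"
    and M: "M \<in> S" and r: "2 \<le> r" "r \<le> n - 2" and x: "M $$ (0,r) \<noteq> 0"
  shows "qf l n M = 0"
proof -
  have n: "r < n - 1" "n - 1 < n" "1 < r" using r n4 by auto
  have "det (mat 4 4 (\<lambda>(i,j). M $$ (ix4 0 1 r (n-1) i, ix4 0 1 r (n-1) j))) = 0"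
    using minor4_zero[OF carr[OF M]] rk M r n by auto
  moreover have z: "M $$ (r,r) = 0" "M $$ (r,1) = 0" "M $$ (1,r) = 0"
    using wsz[OF M] r n by auto
  moreover have y: "M $$ (r,0) = M $$ (0,r)" "M $$ (1,0) = M $$ (0,1)" "M $$ (n-1,0) = M $$ (0,n-1)"
     "M $$ (n-1,r) = l * M $$ (0,r)" "M $$ (r,n-1) = l * M $$ (0,r)" "M $$ (n-1,1) = M $$ (1,n-1)"
    using symm[OF M] r n hl M by auto
  ultimately have "(M $$ (0,r))^2 * qf l n M = 0"
    unfolding qf_def by (simp add: det4 ix4_def power2_eq_square algebra_simps)
  then show ?thesis using x by simp
qed

lemma step5:
  assumes hl: "\<forall>M\<in>S. \<forall>s. 2 \<le> s \<and> s \<le> n - 2 \<longrightarrow> M $$ (s,n-1) = l * M $$ (0,s)"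
    and a: "a \<in> S" and b: "b \<in> S" and r1: "2 \<le> r1" "r1 \<le> n - 2" and r2: "2 \<le> r2" "r2 \<le> n - 2"
    and D: "a $$ (0,r1) * b $$ (0,r2) - a $$ (0,r2) * b $$ (0,r1) \<noteq> 0"
    and M: "M \<in> S"
  shows "qf l n M = 0"
proof (cases "\<exists>r. 2 \<le> r \<and> r \<le> n - 2 \<and> M $$ (0,r) \<noteq> 0")
  case True
  then show ?thesis using step4[OF hl M] by auto
next
  case False
  have nz: "X \<in> S \<Longrightarrow> X $$ (0,r1) \<noteq> 0 \<or> X $$ (0,r2) \<noteq> 0 \<Longrightarrow> qf l n X = 0" for X
    using step4[OF hl, of X] r1 r2 by auto
  have i: "r1 < n" "r2 < n" "0 < n" "1 < n" "n - 1 < n" using r1 r2 n4 by auto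
  have M0: "M $$ (0,r1) = 0" "M $$ (0,r2) = 0" using False r1 r2 by auto
  have ab: "a + b \<in> S" "a + M \<in> S" "b + M \<in> S" "a + b + M \<in> S" using add_S a b M by auto
  have ua: "a $$ (0,r1) \<noteq> 0 \<or> a $$ (0,r2) \<noteq> 0" using D by auto
  have ub: "b $$ (0,r1) \<noteq> 0 \<or> b $$ (0,r2) \<noteq> 0" using D by auto
  have q1: "qf l n a = 0" using nz[OF a ua] .
  have q2: "qf l n b = 0" using nz[OF b ub] .
  have q3: "qf l n (a + M) = 0" using nz[OF ab(2)] ua M0 add_idx[OF a M] i by auto
  have q4: "qf l n (b + M) = 0" using nz[OF ab(3)] ub M0 add_idx[OF b M] i by auto
  have uab: "(a + b) $$ (0,r1) \<noteq> 0 \<or> (a + b) $$ (0,r2) \<noteq> 0"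
  proof (rule ccontr)
    assume "\<not> ?thesis"
    then have "a $$ (0,r1) = - b $$ (0,r1)" "a $$ (0,r2) = - b $$ (0,r2)"
      using add_idx[OF a b] i by (auto simp: add_eq_0_iff)
    then show False using D by (simp add: algebra_simps)
  qed
  have q5: "qf l n (a + b) = 0" using nz[OF ab(1) uab] .
  have "(a + b + M) $$ (0,r1) = (a + b) $$ (0,r1)" "(a + b + M) $$ (0,r2) = (a + b) $$ (0,r2)"
    using add_idx[OF ab(1) M] M0 i by auto
  then have q6: "qf l n (a + b + M) = 0" using nz[OF ab(4)] uab by auto
  have "qf l n M = qf l n (a + M) + qf l n (b + M) + qf l n (a + b) - qf l n (a + b + M) - qf l n a - qf l n b"
    unfolding qf_def using add_idx[OF ab(1) M] add_idx[OF a b] add_idx[OF a M] add_idx[OF b M] i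
    by (simp add: power2_eq_square algebra_simps)
  then show ?thesis using q1 q2 q3 q4 q5 q6 by simp
qed

end


lemma mat_subspace_image:
  fixes f :: "'a::field mat \<Rightarrow> 'a mat"
  assumes sub: "mat_subspace n S" and SC: "S \<subseteq> carrier_mat n n"
    and fc: "\<And>M. M \<in> carrier_mat n n \<Longrightarrow> f M \<in> carrier_mat m m"
    and fadd: "\<And>M N. M \<in> carrier_mat n n \<Longrightarrow> N \<in> carrier_mat n n \<Longrightarrow> f (M + N) = f M + f N"
    and fsm: "\<And>c M. M \<in> carrier_mat n n \<Longrightarrow> f (c \<cdot>\<^sub>m M) = c \<cdot>\<^sub>m f M"
  shows "mat_subspace m (f ` S)"
proof -
  have sm: "submodule class_ring S (module_mat TYPE('a) n n)"
    using sub unfolding mat_subspace_def by (rule VectorSpace.subspace.submod)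
  have vs: "vectorspace class_ring (module_mat TYPE('a) m m)" by (rule matrix_vs)
  then have md: "Module.module class_ring (module_mat TYPE('a) m m)" by (simp add: vectorspace_def)
  have z: "0\<^sub>m n n \<in> S" using submodule.zero_closed[OF sm] by (simp add: module_mat_simps)
  have "f (0 \<cdot>\<^sub>m 0\<^sub>m n n) = 0 \<cdot>\<^sub>m f (0\<^sub>m n n)" by (rule fsm) auto
  also have "\<dots> = 0\<^sub>m m m" using fc[of "0\<^sub>m n n"] by (intro eq_matI) auto
  finally have f0: "f (0\<^sub>m n n) = 0\<^sub>m m m" by simp
  show ?thesis
    unfolding mat_subspace_def
  proof (rule VectorSpace.subspace.intro[OF vs], rule submodule.intro[OF md])
    show "f ` S \<subseteq> carrier (module_mat TYPE('a) m m)" using fc SC by (auto simp: module_mat_simps)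
    show "zero (module_mat TYPE('a) m m) \<in> f ` S" using z f0 by (auto simp: module_mat_simps intro!: image_eqI[of _ f "0\<^sub>m n n"])
    fix v w assume "v \<in> f ` S" "w \<in> f ` S"
    then obtain M N where MN: "M \<in> S" "N \<in> S" "v = f M" "w = f N" by auto
    have "M + N \<in> S" using submodule.m_closed[OF sm MN(1,2)] by (simp add: module_mat_simps)
    moreover have "f (M + N) = v + w" using fadd MN SC by auto
    ultimately show "add (module_mat TYPE('a) m m) v w \<in> f ` S" by (auto simp: module_mat_simps intro!: image_eqI[of _ f "M + N"])
  next
    fix c v assume "c \<in> carrier (class_ring :: 'a ring)" "v \<in> f ` S"
    then obtain M where M: "M \<in> S" "v = f M" by auto
    have "c \<cdot>\<^sub>m M \<in> S" using submodule.smult_closed[OF sm _ M(1)] by (simp add: module_mat_simps)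
    moreover have "f (c \<cdot>\<^sub>m M) = c \<cdot>\<^sub>m v" using fsm M SC by auto
    ultimately show "smult (module_mat TYPE('a) m m) c v \<in> f ` S" by (auto simp: module_mat_simps intro!: image_eqI[of _ f "c \<cdot>\<^sub>m M"])
  qed
qed

lemma cong_comp:
  fixes A B M :: "'a::comm_ring_1 mat"
  assumes A: "A \<in> carrier_mat n n" and B: "B \<in> carrier_mat n n" and M: "M \<in> carrier_mat n n"
  shows "A * (B * M * transpose_mat B) * transpose_mat A = (A * B) * M * transpose_mat (A * B)"
proof -
  have t: "transpose_mat (A * B) = transpose_mat B * transpose_mat A" using transpose_mult[OF A B] .
  have c: "transpose_mat A \<in> carrier_mat n n" "transpose_mat B \<in> carrier_mat n n" using A B by auto
  show ?thesis unfolding t using A B M c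
    by (simp add: assoc_mult_mat[of _ n n _ n _ n])
qed

lemma cong_sym:
  fixes G M :: "'a::comm_ring_1 mat"
  assumes G: "G \<in> carrier_mat n n" and M: "M \<in> carrier_mat n n" and s: "transpose_mat M = M"
  shows "transpose_mat (G * M * transpose_mat G) = G * M * transpose_mat G"
proof -
  have c: "G * M \<in> carrier_mat n n" "transpose_mat G \<in> carrier_mat n n" using G M by auto
  have "transpose_mat (G * M * transpose_mat G) = transpose_mat (transpose_mat G) * transpose_mat (G * M)"
    using transpose_mult[OF c(1) c(2)] .
  also have "\<dots> = G * (transpose_mat M * transpose_mat G)" using transpose_mult[OF G M] by simp
  also have "\<dots> = G * M * transpose_mat G" using G M c s by simp
  finally show ?thesis .
qed

lemma inv_comp:
  fixes A A' B B' :: "'a::comm_ring_1 mat"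
  assumes c: "A \<in> carrier_mat n n" "A' \<in> carrier_mat n n" "B \<in> carrier_mat n n" "B' \<in> carrier_mat n n"
    and h: "A * A' = 1\<^sub>m n" "B * B' = 1\<^sub>m n"
  shows "(A * B) * (B' * A') = 1\<^sub>m n"
proof -
  have "(A * B) * (B' * A') = A * ((B * B') * A')" using c by (simp add: assoc_mult_mat[of _ n n _ n _ n])
  also have "\<dots> = 1\<^sub>m n" using h c by simp
  finally show ?thesis .
qed

lemma conclude:
  fixes S :: "'a::field mat set"
  assumes sub: "mat_subspace n S" and SC: "S \<subseteq> carrier_mat n n"
    and G: "G \<in> carrier_mat n n" and H: "H \<in> carrier_mat n n" and GH: "G * H = 1\<^sub>m n" and HG: "H * G = 1\<^sub>m n"
    and W: "\<forall>M\<in>S. G * M * transpose_mat G \<in> WS11 n"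
  shows "\<exists>Q V. Q \<in> carrier_mat n n \<and> invertible_mat Q \<and> mat_subspace n V \<and>
           V \<subseteq> WS11 n \<and> S = congr_img Q V"
proof (intro exI conjI)
  let ?f = "\<lambda>M. G * M * transpose_mat G"
  show "H \<in> carrier_mat n n" by fact
  show "invertible_mat H" unfolding invertible_mat_def inverts_mat_def using H G GH HG by (auto intro!: exI[of _ G])
  show "mat_subspace n (?f ` S)"
  proof (rule mat_subspace_image[OF sub SC])
    fix M N :: "'a mat" assume M: "M \<in> carrier_mat n n" and N: "N \<in> carrier_mat n n"
    show "?f M \<in> carrier_mat n n" using G M by auto
    have "G * (M + N) = G * M + G * N" using mult_add_distrib_mat[OF G M N] .
    then show "?f (M + N) = ?f M + ?f N" using G M N
      by (simp add: add_mult_distrib_mat[of _ n n _ _ n])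
  next
    fix c and M :: "'a mat" assume M: "M \<in> carrier_mat n n"
    show "?f (c \<cdot>\<^sub>m M) = c \<cdot>\<^sub>m ?f M" using G M
      by (simp add: mult_smult_distrib[of _ n n _ n] mult_smult_assoc_mat[of _ n n _ n])
  qed
  show "?f ` S \<subseteq> WS11 n" using W by auto
  show "S = congr_img H (?f ` S)"
    unfolding congr_img_def image_image
  proof -
    have "H * ?f M * transpose_mat H = M" if "M \<in> S" for M
    proof -
      have M: "M \<in> carrier_mat n n" using that SC by auto
      have "H * ?f M * transpose_mat H = (H * G) * M * transpose_mat (H * G)" using cong_comp[OF H G M] .
      then show ?thesis using HG M by simp
    qed
    then show "S = (\<lambda>x. H * (G * x * transpose_mat G) * transpose_mat H) ` S" by simp
  qed
qed


lemma (in vectorspace) dim_le_bound: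
  assumes bnd: "\<And>B. B \<subseteq> carrier V \<Longrightarrow> finite B \<Longrightarrow> lin_indpt B \<Longrightarrow> card B \<le> k"
  shows "dim \<le> k"
proof -
  have fin: "finite B" if B: "B \<subseteq> carrier V" "lin_indpt B" for B
  proof (rule ccontr)
    assume inf: "infinite B"
    obtain B' where B': "B' \<subseteq> B" "finite B'" "card B' = Suc k"
      using infinite_arbitrarily_large[OF inf] by blast
    then have "lin_indpt B'" using subset_li_is_li B by auto
    then show False using bnd[of B'] B B' by auto
  qed
  let ?C = "card ` {B. B \<subseteq> carrier V \<and> lin_indpt B}"
  have "?C \<subseteq> {..k}" using bnd fin by auto
  then have finC: "finite ?C" by (rule finite_subset) auto
  have e: "lin_indpt {}" unfolding lin_dep_def by auto
  then have neC: "?C \<noteq> {}" by auto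
  obtain B0 where B0: "B0 \<subseteq> carrier V" "lin_indpt B0" "card B0 = Max ?C"
    using Max_in[OF finC neC] by auto
  have max: "maximal B0 (\<lambda>S. S \<subseteq> carrier V \<and> lin_indpt S)"
    unfolding maximal_def
  proof (rule conjI)
    show "B0 \<subseteq> carrier V \<and> lin_indpt B0" using B0 by auto
    show "\<forall>B. B0 \<subseteq> B \<and> B \<subseteq> carrier V \<and> lin_indpt B \<longrightarrow> B = B0"
    proof (intro allI impI)
    fix B assume B: "B0 \<subseteq> B \<and> B \<subseteq> carrier V \<and> lin_indpt B"
    then have fB: "finite B" using fin by auto
    have "card B \<le> Max ?C" using Max_ge[OF finC] B by auto
    moreover have "card B0 \<le> card B" using card_mono[OF fB] B by auto
    ultimately have "card B0 = card B" using B0 by auto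
    then show "B = B0" using card_subset_eq[OF fB] B by auto
    qed
  qed
  have "gen_set B0" using max_li_is_gen[OF max] .
  then have "dim \<le> card B0" using gen_ge_dim[OF fin[OF B0(1,2)] B0(1)] by auto
  also have "card B0 \<le> k" using bnd[OF B0(1) fin[OF B0(1,2)] B0(2)] .
  finally show ?thesis .
qed

lemma (in LS) dimD:
  assumes dim: "mat_subspace_dim (n-1) (upper_left n ` S) > 5"
  shows "\<exists>a\<in>S. \<exists>b\<in>S. \<exists>r1 r2. 2 \<le> r1 \<and> r1 \<le> n-2 \<and> 2 \<le> r2 \<and> r2 \<le> n-2 \<and>
           a $$ (0,r1) * b $$ (0,r2) - a $$ (0,r2) * b $$ (0,r1) \<noteq> 0"
proof (rule ccontr)
  assume ND0: "\<not> ?thesis"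
  have ND: "\<And>a b r1 r2. a \<in> S \<Longrightarrow> b \<in> S \<Longrightarrow> 2 \<le> r1 \<Longrightarrow> r1 \<le> n-2 \<Longrightarrow> 2 \<le> r2 \<Longrightarrow> r2 \<le> n-2 \<Longrightarrow>
      a $$ (0,r1) * b $$ (0,r2) = a $$ (0,r2) * b $$ (0,r1)"
    using ND0 by force
  define m where "m = n - 1"
  interpret V0: vectorspace "class_ring :: 'a ring" "module_mat TYPE('a) m m" by (rule matrix_vs)
  let ?W = "upper_left n ` S"
  have SC: "S \<subseteq> carrier_mat n n" using carr by auto
  have Wsub: "mat_subspace m ?W"
  proof (rule mat_subspace_image[OF sub SC])
    fix M N :: "'a mat" assume M: "M \<in> carrier_mat n n" and N: "N \<in> carrier_mat n n"
    show "upper_left n M \<in> carrier_mat m m" unfolding upper_left_def m_def by auto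
    show "upper_left n (M + N) = upper_left n M + upper_left n N"
      unfolding upper_left_def using M N by (intro eq_matI) auto
  next
    fix c and M :: "'a mat" assume M: "M \<in> carrier_mat n n"
    show "upper_left n (c \<cdot>\<^sub>m M) = c \<cdot>\<^sub>m upper_left n M"
      unfolding upper_left_def using M by (intro eq_matI) auto
  qed
  have Wsp: "VectorSpace.subspace class_ring ?W (module_mat TYPE('a) m m)" using Wsub unfolding mat_subspace_def .
  have Wsm: "submodule class_ring ?W (module_mat TYPE('a) m m)" using Wsp by (rule VectorSpace.subspace.submod)
  obtain u :: "nat \<Rightarrow> 'a" and t :: "'a mat \<Rightarrow> 'a" where
    ut: "\<And>M j. M \<in> S \<Longrightarrow> 2 \<le> j \<Longrightarrow> j \<le> n-2 \<Longrightarrow> M $$ (0,j) = t M * u j"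
  proof (cases "\<exists>a\<in>S. \<exists>r0. 2 \<le> r0 \<and> r0 \<le> n-2 \<and> a $$ (0,r0) \<noteq> 0")
    case True
    then obtain a r0 where a: "a \<in> S" "2 \<le> r0" "r0 \<le> n-2" "a $$ (0,r0) \<noteq> 0" by auto
    show ?thesis
    proof (rule that[of "\<lambda>M. M $$ (0,r0) / a $$ (0,r0)" "\<lambda>j. a $$ (0,j)"])
      fix M j assume M: "M \<in> S" and j: "2 \<le> j" "j \<le> n-2"
      have "a $$ (0,r0) * M $$ (0,j) = a $$ (0,j) * M $$ (0,r0)" using ND[OF a(1) M a(2,3) j] .
      then show "M $$ (0,j) = M $$ (0,r0) / a $$ (0,r0) * a $$ (0,j)" using a(4) by (simp add: field_simps)
    qed
  next
    case False
    show ?thesis by (rule that[of "\<lambda>M. 0" "\<lambda>j. 0"]) (use False in auto)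
  qed
  define U where "U = mat m m (\<lambda>(i,j). if i = 0 \<and> 2 \<le> j then u j else if j = 0 \<and> 2 \<le> i then u i else (0::'a))"
  define E00 where "E00 = mat m m (\<lambda>(i,j). if i = 0 \<and> j = 0 then 1 else (0::'a))"
  define E01 where "E01 = mat m m (\<lambda>(i,j). if (i = 0 \<and> j = 1) \<or> (i = 1 \<and> j = 0) then 1 else (0::'a))"
  define E11 where "E11 = mat m m (\<lambda>(i,j). if i = 1 \<and> j = 1 then 1 else (0::'a))"
  let ?A = "{E00, E01, E11, U}"
  have Acar: "?A \<subseteq> carrier (module_mat TYPE('a) m m)"
    unfolding U_def E00_def E01_def E11_def by (auto simp: module_mat_simps)
  have decomp: "upper_left n M = M $$ (0,0) \<cdot>\<^sub>m E00 + M $$ (0,1) \<cdot>\<^sub>m E01 + M $$ (1,1) \<cdot>\<^sub>m E11 + t M \<cdot>\<^sub>m U"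
    if M: "M \<in> S" for M
  proof (rule eq_matI)
    show "dim_row (upper_left n M) = dim_row (M $$ (0,0) \<cdot>\<^sub>m E00 + M $$ (0,1) \<cdot>\<^sub>m E01 + M $$ (1,1) \<cdot>\<^sub>m E11 + t M \<cdot>\<^sub>m U)"
      "dim_col (upper_left n M) = dim_col (M $$ (0,0) \<cdot>\<^sub>m E00 + M $$ (0,1) \<cdot>\<^sub>m E01 + M $$ (1,1) \<cdot>\<^sub>m E11 + t M \<cdot>\<^sub>m U)"
      unfolding upper_left_def U_def E00_def E01_def E11_def m_def by auto
    fix i j assume "i < dim_row (M $$ (0,0) \<cdot>\<^sub>m E00 + M $$ (0,1) \<cdot>\<^sub>m E01 + M $$ (1,1) \<cdot>\<^sub>m E11 + t M \<cdot>\<^sub>m U)"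
      "j < dim_col (M $$ (0,0) \<cdot>\<^sub>m E00 + M $$ (0,1) \<cdot>\<^sub>m E01 + M $$ (1,1) \<cdot>\<^sub>m E11 + t M \<cdot>\<^sub>m U)"
    then have ij: "i < n - 1" "j < n - 1" unfolding U_def m_def by auto
    have lhs: "upper_left n M $$ (i,j) = M $$ (i,j)" unfolding upper_left_def using ij by auto
    have rhs: "(M $$ (0,0) \<cdot>\<^sub>m E00 + M $$ (0,1) \<cdot>\<^sub>m E01 + M $$ (1,1) \<cdot>\<^sub>m E11 + t M \<cdot>\<^sub>m U) $$ (i,j)
       = M $$ (0,0) * (if i = 0 \<and> j = 0 then 1 else 0) + M $$ (0,1) * (if (i = 0 \<and> j = 1) \<or> (i = 1 \<and> j = 0) then 1 else 0)
         + M $$ (1,1) * (if i = 1 \<and> j = 1 then 1 else 0) + t M * (if i = 0 \<and> 2 \<le> j then u j else if j = 0 \<and> 2 \<le> i then u i else 0)"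
      unfolding U_def E00_def E01_def E11_def m_def using ij by auto
    show "upper_left n M $$ (i,j) = (M $$ (0,0) \<cdot>\<^sub>m E00 + M $$ (0,1) \<cdot>\<^sub>m E01 + M $$ (1,1) \<cdot>\<^sub>m E11 + t M \<cdot>\<^sub>m U) $$ (i,j)"
      unfolding lhs rhs
    proof -
      consider "i = 0 \<and> j = 0" | "i = 0 \<and> j = 1" | "i = 1 \<and> j = 0" | "i = 0 \<and> 2 \<le> j" | "j = 0 \<and> 2 \<le> i"
        | "1 \<le> i \<and> 1 \<le> j" by linarith
      then show "M $$ (i,j) = M $$ (0,0) * (if i = 0 \<and> j = 0 then 1 else 0) + M $$ (0,1) * (if (i = 0 \<and> j = 1) \<or> (i = 1 \<and> j = 0) then 1 else 0)
         + M $$ (1,1) * (if i = 1 \<and> j = 1 then 1 else 0) + t M * (if i = 0 \<and> 2 \<le> j then u j else if j = 0 \<and> 2 \<le> i then u i else 0)"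
      proof cases
        case 3 then show ?thesis using symm[OF M, of 0 1] ij by auto
      next
        case 4 then show ?thesis using ut[OF M, of j] ij by auto
      next
        case 5 then show ?thesis using ut[OF M, of i] symm[OF M, of 0 i] ij by auto
      next
        case 6
        then show ?thesis
        proof (cases "i = 1 \<and> j = 1")
          case False
          then have "M $$ (i,j) = 0" using wsz[OF M] 6 ij by auto
          then show ?thesis using 6 False by auto
        qed auto
      qed auto
    qed
  qed
  have spanA: "?W \<subseteq> V0.span ?A"
  proof
    fix X assume "X \<in> ?W"
    then obtain M where M: "M \<in> S" "X = upper_left n M" by auto
    have sp: "submodule class_ring (V0.span ?A) (module_mat TYPE('a) m m)" by (rule V0.span_is_submodule[OF Acar])
    have own: "?A \<subseteq> V0.span ?A" by (rule V0.in_own_span[OF Acar])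
    have sm: "c \<cdot>\<^sub>m Y \<in> V0.span ?A" if "Y \<in> V0.span ?A" for c Y
      using submodule.smult_closed[OF sp _ that] by (simp add: module_mat_simps)
    have ad: "Y + Z \<in> V0.span ?A" if "Y \<in> V0.span ?A" "Z \<in> V0.span ?A" for Y Z
      using submodule.m_closed[OF sp that] by (simp add: module_mat_simps)
    show "X \<in> V0.span ?A" unfolding M(2) decomp[OF M(1)]
      by (intro ad sm) (use own in auto)
  qed
  have cardA: "card ?A \<le> 4"
  proof -
    have "?A = set [E00, E01, E11, U]" by simp
    then show ?thesis using card_length[of "[E00, E01, E11, U]"] by simp
  qed
  interpret VW: vectorspace "class_ring :: 'a ring" "V0.vs ?W" by (rule V0.subspace_is_vs[OF Wsp])
  have "VW.dim \<le> 4"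
  proof (rule VW.dim_le_bound)
    fix B assume B: "B \<subseteq> carrier (V0.vs ?W)" "finite B" "VW.lin_indpt B"
    have BW: "B \<subseteq> ?W" using B(1) by simp
    have li: "V0.lin_indpt B" using B(3) V0.span_li_not_depend(2)[OF BW Wsm] by simp
    have finA: "finite ?A" by simp
    have BA: "B \<subseteq> V0.span ?A" using BW spanA by (rule subset_trans)
    obtain C :: "'a mat set" where "int (card C) \<le> int (card ?A) - int (card B)"
      using V0.replacement[OF B(2) finA Acar li BA] by blast
    then show "card B \<le> 4" using cardA by linarith
  qed
  moreover have "mat_subspace_dim (n-1) ?W = VW.dim" unfolding mat_subspace_dim_def m_def ..
  ultimately show False using dim by simp
qed



lemma alg2:
  fixes y0 c0 d0 y c d :: "'a::field"
  assumes y0: "y0 \<noteq> 0" and q0: "y0 * d0 = c0^2" and q: "y * d = c^2" and qs: "(y0 + y) * (d0 + d) = (c0 + c)^2"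
  shows "c * y0 = y * c0" "d * y0 = c * c0"
proof -
  have e: "y0 * d + y * d0 = 2 * c0 * c" using q0 q qs by (simp add: power2_eq_square algebra_simps)
  have "(c * y0 - y * c0)^2 = c^2 * y0^2 - 2 * c * y0 * y * c0 + y^2 * c0^2" by (simp add: power2_eq_square algebra_simps)
  also have "\<dots> = y * y0 * (y0 * d + y * d0 - 2 * c * c0)" unfolding q[symmetric] q0[symmetric]
    by (simp add: power2_eq_square algebra_simps)
  also have "\<dots> = 0" using e by (simp add: algebra_simps)
  finally show c1: "c * y0 = y * c0" by simp
  have "y0 * (c0 * c) = c0 * (c * y0)" by (simp add: ac_simps)
  also have "\<dots> = c0 * (y * c0)" using c1 by simp
  also have "\<dots> = y * c0^2" by (simp add: power2_eq_square ac_simps)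
  also have "\<dots> = y * (y0 * d0)" using q0 by simp
  also have "\<dots> = y0 * (y * d0)" by (simp add: ac_simps)
  finally have "y0 * (c0 * c) = y0 * (y * d0)" .
  then have cc: "c0 * c = y * d0" using y0 by simp
  have "y0 * d = 2 * c0 * c - y * d0" using e by (simp add: algebra_simps)
  also have "\<dots> = 2 * c0 * c - c0 * c" unfolding cc ..
  also have "\<dots> = c0 * c" by (simp add: algebra_simps)
  finally have "y0 * d = c0 * c" .
  then show "d * y0 = c * c0" by (simp add: algebra_simps)
qed


lemma (in LS) final:
  assumes dim: "mat_subspace_dim (n-1) (upper_left n ` S) > 5"
  shows "\<exists>Q V. Q \<in> carrier_mat n n \<and> invertible_mat Q \<and> mat_subspace n V \<and>
           V \<subseteq> WS11 n \<and> S = congr_img Q V"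
proof -
  obtain a b r1 r2 where ab: "a \<in> S" "b \<in> S" and r: "2 \<le> r1" "r1 \<le> n-2" "2 \<le> r2" "r2 \<le> n-2"
    and D: "a $$ (0,r1) * b $$ (0,r2) - a $$ (0,r2) * b $$ (0,r1) \<noteq> 0"
    using dimD[OF dim] by blast
  obtain l where hl: "\<forall>M\<in>S. \<forall>s. 2 \<le> s \<and> s \<le> n - 2 \<longrightarrow> M $$ (s,n-1) = l * M $$ (0,s)"
    using step2[OF ab r D] by blast
  have q0: "qf l n M = 0" if "M \<in> S" for M using step5[OF hl ab r D that] .
  define E1 where "E1 = emat n (-l) (n-1) 0"
  define yv where "yv M = M $$ (1,1)" for M :: "'a mat"
  define cv where "cv M = M $$ (1,n-1) - l * M $$ (0,1)" for M :: "'a mat"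
  define dv where "dv M = M $$ (n-1,n-1) - 2 * l * M $$ (0,n-1) + l * l * M $$ (0,0)" for M :: "'a mat"
  have nn: "0 < n" "1 < n" "n-1 < n" "n - 1 \<noteq> 0" "1 \<noteq> n-1" "n \<ge> 3" using n4 by auto
  have N1e: "(E1 * M * transpose_mat E1) $$ (i,j) = M $$ (i,j) + (if i = n-1 then -l * M $$ (0,j) else 0)
     + (if j = n-1 then -l * M $$ (i,0) else 0) + (if i = n-1 \<and> j = n-1 then -l * -l * M $$ (0,0) else 0)"
    if M: "M \<in> S" and i: "i < n" and j: "j < n" for M i j
    unfolding E1_def using emat_cong_entry[OF carr[OF M] i j nn(1) nn(4)] .
  have f11: "(E1 * M * transpose_mat E1) $$ (1,1) = yv M" if M: "M \<in> S" for M
    using N1e[OF M nn(2) nn(2)] nn unfolding yv_def by simp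
  have f1p: "(E1 * M * transpose_mat E1) $$ (1,n-1) = cv M" if M: "M \<in> S" for M
    using N1e[OF M nn(2) nn(3)] nn symm[OF M, of 0 1] unfolding cv_def by simp
  have fp1: "(E1 * M * transpose_mat E1) $$ (n-1,1) = cv M" if M: "M \<in> S" for M
    using N1e[OF M nn(3) nn(2)] nn symm[OF M, of 1 "n-1"] unfolding cv_def by simp
  have fpp: "(E1 * M * transpose_mat E1) $$ (n-1,n-1) = dv M" if M: "M \<in> S" for M
    using N1e[OF M nn(3) nn(3)] nn symm[OF M, of 0 "n-1"] unfolding dv_def by (simp add: algebra_simps)
  have fpat: "(E1 * M * transpose_mat E1) $$ (i,j) = 0"
    if M: "M \<in> S" and ij: "i < n" "j < n" "1 \<le> i" "1 \<le> j" "\<not> (i \<in> {1, n-1} \<and> j \<in> {1, n-1})" for M i j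
  proof (cases "i = n - 1")
    case True
    then have j: "2 \<le> j" "j \<le> n - 2" "j \<noteq> n - 1" using ij by auto
    have "M $$ (j,n-1) = l * M $$ (0,j)" using hl M j by auto
    then show ?thesis using N1e[OF M ij(1,2)] True j symm[OF M, of j "n-1"] ij by auto
  next
    case False
    show ?thesis
    proof (cases "j = n - 1")
      case True
      then have i: "2 \<le> i" "i \<le> n - 2" using ij False by auto
      have "M $$ (i,n-1) = l * M $$ (0,i)" using hl M i by auto
      then show ?thesis using N1e[OF M ij(1,2)] True False i symm[OF M, of 0 i] ij by auto
    next
      case False2: False
      have "M $$ (i,j) = 0" using wsz[OF M] ij False False2 by auto
      then show ?thesis using N1e[OF M ij(1,2)] False False2 by auto
    qed
  qed
  have qv: "yv M * dv M = (cv M)^2" if M: "M \<in> S" for M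
    using q0[OF M] unfolding qf_def yv_def cv_def dv_def by simp
  have lin: "yv (M + N) = yv M + yv N" "cv (M + N) = cv M + cv N" "dv (M + N) = dv M + dv N"
    if M: "M \<in> S" and N: "N \<in> S" for M N
    unfolding yv_def cv_def dv_def using add_idx[OF M N] nn by (auto simp: algebra_simps)
  obtain \<alpha> \<beta> where hab: "\<And>M. M \<in> S \<Longrightarrow> cv M + \<alpha> * dv M + \<beta> * (yv M + 2 * \<alpha> * cv M + \<alpha> * \<alpha> * dv M) = 0
     \<and> dv M + 2 * \<beta> * (cv M + \<alpha> * dv M) + \<beta> * \<beta> * (yv M + 2 * \<alpha> * cv M + \<alpha> * \<alpha> * dv M) = 0"
  proof (cases "\<exists>M0\<in>S. yv M0 \<noteq> 0")
    case False
    show ?thesis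
    proof (rule that[of 1 "-1"])
      fix M assume M: "M \<in> S"
      have y: "yv M = 0" using False M by auto
      then have "cv M = 0" using qv[OF M] by simp
      then show "cv M + 1 * dv M + - 1 * (yv M + 2 * 1 * cv M + 1 * 1 * dv M) = 0 \<and>
          dv M + 2 * - 1 * (cv M + 1 * dv M) + - 1 * - 1 * (yv M + 2 * 1 * cv M + 1 * 1 * dv M) = 0"
        using y by simp
    qed
  next
    case True
    then obtain M0 where M0: "M0 \<in> S" "yv M0 \<noteq> 0" by auto
    show ?thesis
    proof (rule that[of 0 "- cv M0 / yv M0"])
      fix M assume M: "M \<in> S"
      have MM: "M0 + M \<in> S" using add_S M0(1) M by auto
      have qs: "(yv M0 + yv M) * (dv M0 + dv M) = (cv M0 + cv M)^2"
        using qv[OF MM] lin[OF M0(1) M] by simp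
      note rel = alg2[OF M0(2) qv[OF M0(1)] qv[OF M] qs]
      have c: "cv M = yv M * cv M0 / yv M0" using rel(1) M0(2) by (simp add: field_simps)
      have d: "dv M = cv M * cv M0 / yv M0" using rel(2) M0(2) by (simp add: field_simps)
      show "cv M + 0 * dv M + - cv M0 / yv M0 * (yv M + 2 * 0 * cv M + 0 * 0 * dv M) = 0 \<and>
          dv M + 2 * (- cv M0 / yv M0) * (cv M + 0 * dv M) + - cv M0 / yv M0 * (- cv M0 / yv M0) * (yv M + 2 * 0 * cv M + 0 * 0 * dv M) = 0"
        unfolding d unfolding c using M0(2) by (simp add: field_simps power2_eq_square)
    qed
  qed
  define E2 where "E2 = emat n \<alpha> 1 (n-1)"
  define E3 where "E3 = emat n \<beta> (n-1) 1"
  define E1' where "E1' = emat n l (n-1) 0"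
  define E2' where "E2' = emat n (-\<alpha>) 1 (n-1)"
  define E3' where "E3' = emat n (-\<beta>) (n-1) 1"
  define G where "G = E3 * (E2 * E1)"
  define H where "H = E1' * (E2' * E3')"
  have car: "E1 \<in> carrier_mat n n" "E2 \<in> carrier_mat n n" "E3 \<in> carrier_mat n n"
    "E1' \<in> carrier_mat n n" "E2' \<in> carrier_mat n n" "E3' \<in> carrier_mat n n"
    unfolding E1_def E2_def E3_def E1'_def E2'_def E3'_def by auto
  have i1: "E1 * E1' = 1\<^sub>m n" "E1' * E1 = 1\<^sub>m n"
    unfolding E1_def E1'_def using emat_inv[of "n-1" 0 n "-l"] emat_inv[of "n-1" 0 n "l"] nn by auto
  have i2: "E2 * E2' = 1\<^sub>m n" "E2' * E2 = 1\<^sub>m n"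
    unfolding E2_def E2'_def using emat_inv[of 1 "n-1" n "\<alpha>"] emat_inv[of 1 "n-1" n "-\<alpha>"] nn by auto
  have i3: "E3 * E3' = 1\<^sub>m n" "E3' * E3 = 1\<^sub>m n"
    unfolding E3_def E3'_def using emat_inv[of "n-1" 1 n "\<beta>"] emat_inv[of "n-1" 1 n "-\<beta>"] nn by auto
  have Gc: "G \<in> carrier_mat n n" and Hc: "H \<in> carrier_mat n n" unfolding G_def H_def using car by auto
  have "(E3 * E2) * (E2' * E3') = 1\<^sub>m n" using inv_comp[OF car(3,6,2,5) i3(1) i2(1)] .
  then have "((E3 * E2) * E1) * (E1' * (E2' * E3')) = 1\<^sub>m n"
    using inv_comp[OF _ _ car(1,4) _ i1(1), of "E3 * E2" "E2' * E3'"] car by auto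
  then have GH: "G * H = 1\<^sub>m n" unfolding G_def H_def using car by (simp add: assoc_mult_mat[of _ n n _ n _ n])
  have "(E2' * E3') * (E3 * E2) = 1\<^sub>m n" using inv_comp[OF car(5,2,6,3) i2(2) i3(2)] .
  then have HG: "H * G = 1\<^sub>m n" unfolding G_def H_def 
    using inv_comp[OF car(4,1) _ _ i1(2), of "E2' * E3'" "E3 * E2"] car by (simp add: assoc_mult_mat[of _ n n _ n _ n])
  have W: "\<forall>M\<in>S. G * M * transpose_mat G \<in> WS11 n"
  proof
    fix M assume M: "M \<in> S"
    have Mc: "M \<in> carrier_mat n n" using carr[OF M] .
    have N1c: "E1 * M * transpose_mat E1 \<in> carrier_mat n n" using car(1) Mc by auto
    have eq: "G * M * transpose_mat G = E3 * (E2 * (E1 * M * transpose_mat E1) * transpose_mat E2) * transpose_mat E3"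
      unfolding G_def using cong_comp[OF car(2,1) Mc] cong_comp[OF car(3) _ Mc, of "E2 * E1"] car by auto
    have Gsym: "transpose_mat (G * M * transpose_mat G) = G * M * transpose_mat G"
      using cong_sym[OF Gc Mc] symS M unfolding sym_mats_def by auto
    have z: "(G * M * transpose_mat G) $$ (i,j) = 0"
      if ij: "i < n" "j < n" "1 \<le> i" "1 \<le> j" "2 \<le> max i j" for i j
      unfolding eq E2_def E3_def
    proof (rule fin_step[OF N1c nn(6) _ _ _ _ ij])
      show "\<And>i j. i < n \<Longrightarrow> j < n \<Longrightarrow> 1 \<le> i \<Longrightarrow> 1 \<le> j \<Longrightarrow> \<not> (i \<in> {1, n - 1} \<and> j \<in> {1, n - 1}) \<Longrightarrow>
        (E1 * M * transpose_mat E1) $$ (i, j) = 0" using fpat[OF M] by blast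
      show "(E1 * M * transpose_mat E1) $$ (n - 1, 1) = (E1 * M * transpose_mat E1) $$ (1, n - 1)"
        using fp1[OF M] f1p[OF M] by simp
    qed (use hab[OF M] f11[OF M] f1p[OF M] fpp[OF M] in auto)
    show "G * M * transpose_mat G \<in> WS11 n"
      unfolding WS11_def sym_mats_def using Gsym z Gc Mc by auto
  qed
  show ?thesis using conclude[OF sub _ Gc Hc GH HG W] carr by auto
qed


theorem lemma4p8:
  fixes S :: "'a::field mat set" and n :: nat
  assumes "n \<ge> 4"
    and "mat_subspace n S"
    and "S \<subseteq> sym_mats n"
    and "\<forall>M\<in>S. vec_space.rank n M \<le> 3"
    and "upper_left n ` S \<subseteq> WS11 (n - 1)"
    and "mat_subspace_dim (n - 1) (upper_left n ` S) > 5"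
  shows "\<exists>Q V. Q \<in> carrier_mat n n \<and> invertible_mat Q \<and> mat_subspace n V \<and>
           V \<subseteq> WS11 n \<and> S = congr_img Q V"
proof -
  interpret LS S n using assms(1-5) by unfold_locales
  show ?thesis using final[OF assms(6)] .
qed

end
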